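(* For every integer $d\ge1$ and every integer $0\le i\le d$, $$a\Big(\tbinom{d+2}{2}-1,\,d+1,\,i\Big)\ \ge\ a\Big(\tbinom{d+2}{2},\,d+1,\,i\Big).$$
   Context: $a(n,k,l)$ denotes the number of integer vectors $(a_1,\dots,a_l)$ with $a_1+\dots+a_l=n$ and $1\le a_j\le k$ for all $j$. *)

theory Defs
  imports Main
begin

definition a :: "int \<Rightarrow> int \<Rightarrow> nat \<Rightarrow> nat" where
  "a n k l = card {xs :: int list. length xs = l \<and> sum_list xs = n \<and>
                    (\<forall>x\<in>set xs. 1 \<le> x \<and> x \<le> k)}"

end

theory Submission
  imports Defs
begin

definition S :: "int \<Rightarrow> int \<Rightarrow> nat \<Rightarrow> int list set" where
  "S n k l = {xs :: int list. length xs = l \<and> sum_list xs = n \<and>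
                    (\<forall>x\<in>set xs. 1 \<le> x \<and> x \<le> k)}"

lemma finite_S: "finite (S n k l)"
proof (rule finite_subset)
  show "S n k l \<subseteq> {xs. set xs \<subseteq> {1..k} \<and> length xs = l}"
    unfolding S_def by auto
  show "finite {xs. set xs \<subseteq> {1..k} \<and> length xs = l}"
    by (rule finite_lists_length_eq) simp
qed

lemma a_S: "a n k l = card (S n k l)"
  unfolding a_def S_def by simp

lemma a_zero: "a n k 0 = (if n = 0 then 1 else 0)"
proof -
  have "{xs :: int list. length xs = 0 \<and> sum_list xs = n \<and>
                    (\<forall>x\<in>set xs. 1 \<le> x \<and> x \<le> k)} = (if n = 0 then {[]} else {})"
    by auto
  then show ?thesis unfolding a_def by simp
qed

lemma S_Suc: "S n (int k) (Suc l) = (\<Union>j<k. (Cons (int j + 1)) ` S (n - 1 - int j) (int k) l)"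
proof
  show "S n (int k) (Suc l) \<subseteq> (\<Union>j<k. (Cons (int j + 1)) ` S (n - 1 - int j) (int k) l)"
  proof
    fix xs assume xs: "xs \<in> S n (int k) (Suc l)"
    then obtain y ys where e: "xs = y # ys" unfolding S_def by (cases xs) auto
    with xs have y: "1 \<le> y" "y \<le> int k" unfolding S_def by auto
    define j where "j = nat (y - 1)"
    have yj: "y = int j + 1" "j < k" using y unfolding j_def by auto
    have "ys \<in> S (n - 1 - int j) (int k) l" using xs e yj unfolding S_def by auto
    then show "xs \<in> (\<Union>j<k. (Cons (int j + 1)) ` S (n - 1 - int j) (int k) l)"
      using e yj by blast
  qed
  show "(\<Union>j<k. (Cons (int j + 1)) ` S (n - 1 - int j) (int k) l) \<subseteq> S n (int k) (Suc l)"
    unfolding S_def by auto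
qed

lemma a_Suc: "a n (int k) (Suc l) = (\<Sum>j<k. a (n - 1 - int j) (int k) l)"
proof -
  have "card (S n (int k) (Suc l)) = (\<Sum>j<k. card ((Cons (int j + 1)) ` S (n - 1 - int j) (int k) l))"
    unfolding S_Suc
    by (rule card_UN_disjoint) (auto simp: finite_S)
  also have "\<dots> = (\<Sum>j<k. card (S (n - 1 - int j) (int k) l))"
    by (rule sum.cong) (auto simp: card_image)
  finally show ?thesis by (simp add: a_S)
qed

lemma a_sym: "a n (int K) l = a (int l * (int K + 1) - n) (int K) l"
proof (induction l arbitrary: n)
  case 0
  then show ?case by (simp add: a_zero)
next
  case (Suc l)
  have "a (int (Suc l) * (int K + 1) - n) (int K) (Suc l)
      = (\<Sum>j<K. a (int (Suc l) * (int K + 1) - n - 1 - int j) (int K) l)"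
    by (rule a_Suc)
  also have "\<dots> = (\<Sum>j<K. a (n - int K + int j) (int K) l)"
  proof (rule sum.cong)
    fix j assume "j \<in> {..<K}"
    have "a (int (Suc l) * (int K + 1) - n - 1 - int j) (int K) l
       = a (int l * (int K + 1) - (int (Suc l) * (int K + 1) - n - 1 - int j)) (int K) l"
      by (rule Suc.IH)
    also have "int l * (int K + 1) - (int (Suc l) * (int K + 1) - n - 1 - int j) = n - int K + int j"
      by (simp add: algebra_simps)
    finally show "a (int (Suc l) * (int K + 1) - n - 1 - int j) (int K) l = a (n - int K + int j) (int K) l" .
  qed simp
  also have "\<dots> = (\<Sum>i<K. a (n - 1 - int (K - Suc i)) (int K) l)"
  proof (rule sum.cong)
    fix x assume "x \<in> {..<K}"
    then have eq: "n - 1 - int (K - Suc x) = n - int K + int x" by (simp add: of_nat_diff)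
    show "a (n - int K + int x) (int K) l = a (n - 1 - int (K - Suc x)) (int K) l"
      unfolding eq by (rule refl)
  qed simp
  also have "\<dots> = (\<Sum>j<K. a (n - 1 - int j) (int K) l)"
    by (rule sum.nat_diff_reindex)
  also have "\<dots> = a n (int K) (Suc l)" by (simp add: a_Suc)
  finally show ?case by simp
qed

lemma unimodal_generic:
  fixes f :: "int \<Rightarrow> nat" and L :: int
  assumes sym: "\<And>n. f n = f (L - n)"
    and dec: "\<And>n. 2 * n \<ge> L \<Longrightarrow> f (n + 1) \<le> f n"
    and h: "\<bar>2 * m - L\<bar> \<le> \<bar>2 * n - L\<bar>"
  shows "f n \<le> f m"
proof -
  have mono: "f y \<le> f x" if "2 * x \<ge> L" "x \<le> y" for x y
    using that(2)
  proof (induction y rule: int_ge_induct)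
    case base then show ?case by simp
  next
    case (step i)
    have "f (i + 1) \<le> f i" using dec[of i] step.hyps that(1) by simp
    then show ?case using step.IH by simp
  qed
  define m' where "m' = (if 2 * m \<ge> L then m else L - m)"
  define n' where "n' = (if 2 * n \<ge> L then n else L - n)"
  have fm: "f m' = f m" unfolding m'_def using sym[of m] by simp
  have fn: "f n' = f n" unfolding n'_def using sym[of n] by simp
  have "2 * m' \<ge> L" "m' \<le> n'" using h unfolding m'_def n'_def by auto
  then have "f n' \<le> f m'" by (rule mono)
  then show ?thesis using fm fn by simp
qed

lemma a_dec: "K \<ge> 1 \<Longrightarrow> 2 * n \<ge> int l * (int K + 1) \<Longrightarrow> a (n + 1) (int K) l \<le> a n (int K) l"
proof (induction l arbitrary: n)
  case 0
  then show ?case by (simp add: a_zero)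
next
  case (Suc l)
  obtain K' where K: "K = Suc K'" using Suc.prems(1) by (cases K) auto
  have uni: "a y (int K) l \<le> a x (int K) l"
    if "\<bar>2 * x - int l * (int K + 1)\<bar> \<le> \<bar>2 * y - int l * (int K + 1)\<bar>" for x y
    by (rule unimodal_generic[where L = "int l * (int K + 1)"])
       (use a_sym Suc.IH[OF Suc.prems(1)] that in auto)
  have key: "a n (int K) l \<le> a (n - int K) (int K) l"
    by (rule uni) (use Suc.prems(2) in \<open>auto simp: algebra_simps\<close>)
  have e1: "a (n + 1) (int K) (Suc l) = a n (int K) l + (\<Sum>j<K'. a (n - 1 - int j) (int K) l)"
    unfolding a_Suc K sum.lessThan_Suc_shift by (simp add: algebra_simps)
  have e2: "a n (int K) (Suc l) = (\<Sum>j<K'. a (n - 1 - int j) (int K) l) + a (n - int K) (int K) l"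
    unfolding a_Suc K sum.lessThan_Suc by (simp add: algebra_simps)
  show ?case using key e1 e2 by simp
qed

theorem lemma6p2:
  fixes d i :: nat
  assumes "1 \<le> d" and "i \<le> d"
  shows "a (int ((d + 2) choose 2) - 1) (int d + 1) i \<ge> a (int ((d + 2) choose 2)) (int d + 1) i"
proof -
  have c: "2 * int ((d + 2) choose 2) = int ((d + 2) * (d + 1))"
  proof -
    have ev: "even ((d + 2) * (d + 1))" by simp
    have "(d + 2) choose 2 = (d + 2) * (d + 1) div 2" unfolding choose_two by simp
    then have "2 * ((d + 2) choose 2) = (d + 2) * (d + 1)" using ev by simp
    then show ?thesis by (metis of_nat_mult of_nat_numeral mult.commute)
  qed
  have "i * (d + 2) + 2 \<le> (d + 1) * (d + 2)"
  proof -
    have "i * (d + 2) + 2 \<le> d * (d + 2) + (d + 2)"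
      using assms(2) by (intro add_mono mult_right_mono) auto
    also have "\<dots> = (d + 1) * (d + 2)" by simp
    finally show ?thesis .
  qed
  then have "int (i * (d + 2) + 2) \<le> int ((d + 1) * (d + 2))" by (rule of_nat_mono)
  then have "int i * (int d + 2) + 2 \<le> (int d + 1) * (int d + 2)" by (simp add: algebra_simps)
  then have "int i * (int (Suc d) + 1) \<le> 2 * (int ((d + 2) choose 2) - 1)"
    using c by (simp add: algebra_simps)
  from a_dec[of "Suc d", OF _ this] show ?thesis by (simp add: add.commute)
qed

end
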